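(* Let $G=(V,E)$ be a simple connected undirected graph with $n\ge 2$ vertices and let $S$ be the output of Algorithm Stage-One on $G$. Then $S\setminus V(G(P_S))$ is an independent set of $G$, and every vertex of $S\setminus V(G(P_S))$ has a neighbor in $V\setminus S$.
   Context: For $v\in V$, $N(v)=\{u\in V:(u,v)\in E\}$; for $U\subseteq V$, $N(U)=\{v\in V\setminus U: v \text{ has a neighbor in } U\}$. Algorithm Stage-One: set $S_0=\emptyset$ and $h=0$. While $S_h$ is not a dominating set of $G$: increase $h$ by one; for each $v\in V\setminus S_{h-1}$ its active degree is $|N(v)\setminus (S_{h-1}\cup N(S_{h-1}))|$; if the maximum active degree over $V\setminus S_{h-1}$ is positive, let $v_h$ be any vertex of $V\setminus S_{h-1}$ of maximum active degree, otherwise let $v_h$ be any vertex of $V\setminus(S_{h-1}\cup N(S_{h-1}))$; set $S_h=S_{h-1}\cup\{v_h\}$. The output is $S=S_p=\{v_1,\dots,v_p\}$. For $h\in\{1,\dots,p\}$, let $S(h)=N(v_h)\setminus(S_{h-1}\cup N(S_{h-1}))$. The set of tied pairs is $P_S=\{(v_h,v): h\in\{1,\dots,p\},\ v\in S\cap S(h)\}$. $G(P_S)$ is the subgraph of $G$ whose edges are the tied pairs and whose vertices are the endpoints of tied pairs; $V(G(P_S))$ is its vertex set. An independent set is a set of pairwise non-adjacent vertices. *)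

theory Defs
  imports Main
begin

definition simple_graph :: "'a set \<Rightarrow> ('a \<times> 'a) set \<Rightarrow> bool" where
  "simple_graph V E \<longleftrightarrow> finite V \<and> E \<subseteq> V \<times> V \<and> sym E \<and> (\<forall>v. (v, v) \<notin> E)"

definition connected_graph :: "'a set \<Rightarrow> ('a \<times> 'a) set \<Rightarrow> bool" where
  "connected_graph V E \<longleftrightarrow> (\<forall>u\<in>V. \<forall>v\<in>V. (u, v) \<in> E\<^sup>*)"

definition nbr :: "'a set \<Rightarrow> ('a \<times> 'a) set \<Rightarrow> 'a \<Rightarrow> 'a set" where
  "nbr V E v = {u \<in> V. (u, v) \<in> E}"

definition nbr_set :: "'a set \<Rightarrow> ('a \<times> 'a) set \<Rightarrow> 'a set \<Rightarrow> 'a set" where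
  "nbr_set V E U = {v \<in> V - U. \<exists>u\<in>U. (u, v) \<in> E}"

definition dominating :: "'a set \<Rightarrow> ('a \<times> 'a) set \<Rightarrow> 'a set \<Rightarrow> bool" where
  "dominating V E D \<longleftrightarrow> D \<subseteq> V \<and> (\<forall>v\<in>V - D. \<exists>u\<in>D. (u, v) \<in> E)"

definition active_degree :: "'a set \<Rightarrow> ('a \<times> 'a) set \<Rightarrow> 'a set \<Rightarrow> 'a \<Rightarrow> nat" where
  "active_degree V E S v = card (nbr V E v - (S \<union> nbr_set V E S))"

text \<open>S_h = {v_1,...,v_h}, where the run is the list [v_1,...,v_p].\<close>
definition Sh :: "'a list \<Rightarrow> nat \<Rightarrow> 'a set" where
  "Sh vs h = set (take h vs)"

text \<open>The list vs = [v_1,...,v_p] is a possible execution of Algorithm Stage-One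
(ties broken arbitrarily): the loop runs while S_{h-1} is not dominating,
each v_h is chosen according to the rule, and it stops when S_p is dominating.\<close>
definition stage_one_run :: "'a set \<Rightarrow> ('a \<times> 'a) set \<Rightarrow> 'a list \<Rightarrow> bool" where
  "stage_one_run V E vs \<longleftrightarrow>
     (\<forall>h\<in>{1..length vs}.
        let S' = Sh vs (h - 1); v = vs ! (h - 1) in
        \<not> dominating V E S' \<and> v \<in> V - S' \<and>
        (if (\<exists>u\<in>V - S'. active_degree V E S' u > 0)
         then (\<forall>u\<in>V - S'. active_degree V E S' u \<le> active_degree V E S' v)
         else v \<in> V - (S' \<union> nbr_set V E S')))
     \<and> dominating V E (set vs)"

definition Sset :: "'a set \<Rightarrow> ('a \<times> 'a) set \<Rightarrow> 'a list \<Rightarrow> nat \<Rightarrow> 'a set" where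
  "Sset V E vs h = nbr V E (vs ! (h - 1)) - (Sh vs (h - 1) \<union> nbr_set V E (Sh vs (h - 1)))"

definition tied_pairs :: "'a set \<Rightarrow> ('a \<times> 'a) set \<Rightarrow> 'a list \<Rightarrow> ('a \<times> 'a) set" where
  "tied_pairs V E vs = {(vs ! (h - 1), v) | h v. h \<in> {1..length vs} \<and> v \<in> set vs \<inter> Sset V E vs h}"

definition tied_vertices :: "'a set \<Rightarrow> ('a \<times> 'a) set \<Rightarrow> 'a list \<Rightarrow> 'a set" where
  "tied_vertices V E vs = fst ` tied_pairs V E vs \<union> snd ` tied_pairs V E vs"

definition independent :: "('a \<times> 'a) set \<Rightarrow> 'a set \<Rightarrow> bool" where
  "independent E I \<longleftrightarrow> (\<forall>x\<in>I. \<forall>y\<in>I. (x, y) \<notin> E)"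

end

theory Submission
  imports Defs
begin

lemma run_step:
  assumes "stage_one_run V E vs" "i < length vs"
  shows "\<not> dominating V E (Sh vs i) \<and> vs ! i \<in> V - Sh vs i \<and>
        (if (\<exists>u\<in>V - Sh vs i. active_degree V E (Sh vs i) u > 0)
         then (\<forall>u\<in>V - Sh vs i. active_degree V E (Sh vs i) u \<le> active_degree V E (Sh vs i) (vs ! i))
         else vs ! i \<in> V - (Sh vs i \<union> nbr_set V E (Sh vs i)))"
proof -
  have h: "Suc i \<in> {1..length vs}" using assms(2) by simp
  have all: "\<forall>h\<in>{1..length vs}. let S' = Sh vs (h - 1); v = vs ! (h - 1) in
        \<not> dominating V E S' \<and> v \<in> V - S' \<and>
        (if (\<exists>u\<in>V - S'. active_degree V E S' u > 0)
         then (\<forall>u\<in>V - S'. active_degree V E S' u \<le> active_degree V E S' v)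
         else v \<in> V - (S' \<union> nbr_set V E S'))"
    using assms(1) unfolding stage_one_run_def by (rule conjunct1)
  have "let S' = Sh vs (Suc i - 1); v = vs ! (Suc i - 1) in
        \<not> dominating V E S' \<and> v \<in> V - S' \<and>
        (if (\<exists>u\<in>V - S'. active_degree V E S' u > 0)
         then (\<forall>u\<in>V - S'. active_degree V E S' u \<le> active_degree V E S' v)
         else v \<in> V - (S' \<union> nbr_set V E S'))" using bspec[OF all h] .
  then show ?thesis unfolding Let_def diff_Suc_1 .
qed

lemma run_mem:
  assumes "stage_one_run V E vs" "i < length vs"
  shows "vs ! i \<in> V - Sh vs i"
  using run_step[OF assms] by (elim conjE)

lemma run_if:
  assumes "stage_one_run V E vs" "i < length vs"
  shows "(if (\<exists>u\<in>V - Sh vs i. active_degree V E (Sh vs i) u > 0)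
         then (\<forall>u\<in>V - Sh vs i. active_degree V E (Sh vs i) u \<le> active_degree V E (Sh vs i) (vs ! i))
         else vs ! i \<in> V - (Sh vs i \<union> nbr_set V E (Sh vs i)))"
  using run_step[OF assms] by (elim conjE)

lemma mem_Sh:
  assumes "u \<in> Sh vs K"
  shows "\<exists>m<K. m < length vs \<and> u = vs ! m"
  using assms unfolding Sh_def by (auto simp: in_set_conv_nth)

lemma tied_snd:
  assumes sg: "simple_graph V E" and run: "stage_one_run V E vs"
    and j: "j < length vs" and k: "k < j" and e: "(vs ! k, vs ! j) \<in> E"
  shows "vs ! j \<in> tied_vertices V E vs"
proof -
  define P where "P = (\<lambda>k. k < j \<and> (vs ! k, vs ! j) \<in> E)"
  define K where "K = (LEAST k. P k)"
  have Pk: "P k" unfolding P_def using k e by (rule conjI)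
  have PK: "P K" unfolding K_def using Pk by (rule LeastI)
  have Kj: "K < j" using PK unfolding P_def by (rule conjunct1)
  have KE: "(vs ! K, vs ! j) \<in> E" using PK unfolding P_def by (rule conjunct2)
  have Kmin: "(vs ! m, vs ! j) \<notin> E" if m: "m < K" for m
  proof
    assume me: "(vs ! m, vs ! j) \<in> E"
    have "m < j" using m Kj by (rule less_trans)
    then have "P m" unfolding P_def using me by (rule conjI)
    then have "K \<le> m" unfolding K_def by (rule Least_le)
    then show False using m by simp
  qed
  have symE: "sym E" using sg unfolding simple_graph_def by blast
  have js: "vs ! j \<in> V - Sh vs j" by (rule run_mem[OF run j])
  have "K \<le> j" using Kj by simp
  then have sub: "Sh vs K \<subseteq> Sh vs j" unfolding Sh_def by (rule set_take_subset_set_take)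
  have a1: "vs ! j \<in> nbr V E (vs ! K)"
  proof -
    have "(vs ! j, vs ! K) \<in> E" using symD[OF symE KE] .
    then show ?thesis using js unfolding nbr_def by blast
  qed
  have a2: "vs ! j \<notin> Sh vs K" using js sub by blast
  have a3: "vs ! j \<notin> nbr_set V E (Sh vs K)"
  proof
    assume "vs ! j \<in> nbr_set V E (Sh vs K)"
    then obtain u where u: "u \<in> Sh vs K" "(u, vs ! j) \<in> E" unfolding nbr_set_def by blast
    obtain m where m: "m < K" "u = vs ! m" using mem_Sh[OF u(1)] by blast
    have "(vs ! m, vs ! j) \<in> E" using u(2) unfolding m(2) .
    then show False using Kmin[OF m(1)] by contradiction
  qed
  have "vs ! j \<in> Sset V E vs (Suc K)" unfolding Sset_def diff_Suc_1 using a1 a2 a3 by blast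
  moreover have "Suc K \<in> {1..length vs}" using Kj j by simp
  moreover have "vs ! j \<in> set vs" using j by (rule nth_mem)
  ultimately have "(vs ! K, vs ! j) \<in> tied_pairs V E vs"
    unfolding tied_pairs_def by (intro CollectI exI[of _ "Suc K"] exI[of _ "vs ! j"]) simp
  then have "snd (vs ! K, vs ! j) \<in> snd ` tied_pairs V E vs" by (rule imageI)
  then show ?thesis unfolding tied_vertices_def by simp
qed

lemma tied_fst:
  assumes "Suc i \<in> {1..length vs}" "z \<in> set vs" "z \<in> Sset V E vs (Suc i)"
  shows "vs ! i \<in> tied_vertices V E vs"
proof -
  have "(vs ! i, z) \<in> tied_pairs V E vs"
    unfolding tied_pairs_def using assms by (intro CollectI exI[of _ "Suc i"] exI[of _ z]) simp
  then have "fst (vs ! i, z) \<in> fst ` tied_pairs V E vs" by (rule imageI)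
  then show ?thesis unfolding tied_vertices_def by simp
qed

theorem mainTheorem5:
  fixes V :: "'a set" and E :: "('a \<times> 'a) set" and vs :: "'a list"
  assumes "simple_graph V E"
    and "connected_graph V E"
    and "card V \<ge> 2"
    and "stage_one_run V E vs"
  shows "independent E (set vs - tied_vertices V E vs)
    \<and> (\<forall>x\<in>set vs - tied_vertices V E vs. \<exists>y\<in>V - set vs. (x, y) \<in> E)"
proof
  note sg = assms(1) and run = assms(4)
  have symE: "sym E" and irr: "\<And>v. (v,v) \<notin> E" and EV: "E \<subseteq> V \<times> V" and finV: "finite V"
    using sg unfolding simple_graph_def by auto
  show "independent E (set vs - tied_vertices V E vs)"
    unfolding independent_def
  proof (intro ballI)
    fix x y assume x: "x \<in> set vs - tied_vertices V E vs" and y: "y \<in> set vs - tied_vertices V E vs"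
    obtain i where i: "i < length vs" "x = vs ! i" using x by (auto simp: in_set_conv_nth)
    obtain j where j: "j < length vs" "y = vs ! j" using y by (auto simp: in_set_conv_nth)
    show "(x, y) \<notin> E"
    proof
      assume e: "(x, y) \<in> E"
      have e': "(y, x) \<in> E" using symD[OF symE e] .
      consider "i = j" | "i < j" | "j < i" by linarith
      then show False
      proof cases
        case 1 then show ?thesis using e irr i j by auto
      next
        case 2
        have "(vs ! i, vs ! j) \<in> E" using e i(2) j(2) by simp
        then have "vs ! j \<in> tied_vertices V E vs" by (rule tied_snd[OF sg run j(1) 2])
        then show ?thesis using y j(2) by simp
      next
        case 3
        have "(vs ! j, vs ! i) \<in> E" using e' i(2) j(2) by simp
        then have "vs ! i \<in> tied_vertices V E vs" by (rule tied_snd[OF sg run i(1) 3])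
        then show ?thesis using x i(2) by simp
      qed
    qed
  qed
  show "\<forall>x\<in>set vs - tied_vertices V E vs. \<exists>y\<in>V - set vs. (x, y) \<in> E"
  proof (rule ballI, rule ccontr)
    fix x assume x: "x \<in> set vs - tied_vertices V E vs"
      and no: "\<not> (\<exists>y\<in>V - set vs. (x, y) \<in> E)"
    obtain i where i: "i < length vs" "x = vs ! i" using x by (auto simp: in_set_conv_nth)
    let ?S = "Sh vs i"
    have step: "vs ! i \<in> V - ?S" by (rule run_mem[OF run i(1)])
    have hi: "Suc i \<in> {1..length vs}" using i(1) by simp
    have noearly: "(u, x) \<notin> E" if u1: "u \<in> ?S" for u
    proof
      assume u2: "(u, x) \<in> E"
      obtain m where m: "m < i" "u = vs ! m" using mem_Sh[OF u1] by blast
      have "(vs ! m, vs ! i) \<in> E" using u2 unfolding m(2) i(2) .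
      then have "vs ! i \<in> tied_vertices V E vs" by (rule tied_snd[OF sg run i(1) m(1)])
      then show False using x unfolding i(2) by blast
    qed
    have xnotN: "x \<notin> nbr_set V E ?S" using noearly unfolding nbr_set_def by auto
    have nbrS: "\<And>z. (z, x) \<in> E \<Longrightarrow> z \<in> set vs"
    proof -
      fix z assume "(z, x) \<in> E"
      then have "(x, z) \<in> E" by (rule symD[OF symE])
      moreover have "z \<in> V" using \<open>(x, z) \<in> E\<close> EV by blast
      ultimately show "z \<in> set vs" using no by blast
    qed
    have Sempty: "Sset V E vs (Suc i) = {}"
    proof (rule ccontr)
      assume "Sset V E vs (Suc i) \<noteq> {}"
      then obtain z where z: "z \<in> Sset V E vs (Suc i)" by auto
      then have "(z, x) \<in> E" unfolding Sset_def nbr_def using i by auto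
      then have "z \<in> set vs" by (rule nbrS)
      have "vs ! i \<in> tied_vertices V E vs" by (rule tied_fst[OF hi \<open>z \<in> set vs\<close> z])
      then show False using x i(2) by simp
    qed
    have ad0: "active_degree V E ?S x = 0"
    proof -
      have e: "nbr V E (vs ! (Suc i - 1)) - (Sh vs (Suc i - 1) \<union> nbr_set V E (Sh vs (Suc i - 1))) = {}"
        using Sempty unfolding Sset_def .
      have e': "nbr V E (vs ! i) - (?S \<union> nbr_set V E ?S) = {}" using e unfolding diff_Suc_1 .
      have "active_degree V E ?S (vs ! i) = 0" unfolding active_degree_def
        by (subst e') (rule card.empty)
      then show ?thesis unfolding i(2) .
    qed
    have xV: "x \<in> V" using step i by auto
    obtain w where w: "w \<in> V" "w \<noteq> x"
    proof -
      have "\<not> V \<subseteq> {x}"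
      proof
        assume "V \<subseteq> {x}"
        then have "card V \<le> card {x}" by (intro card_mono) auto
        then show False using assms(3) by simp
      qed
      then show ?thesis using that by auto
    qed
    have "(x, w) \<in> E\<^sup>*" using assms(2) xV w unfolding connected_graph_def by auto
    then obtain y where xy: "(x, y) \<in> E" using w(2) by (cases rule: converse_rtranclE) auto
    have yx: "(y, x) \<in> E" using symD[OF symE xy] .
    have yV: "y \<in> V" using xy EV by auto
    have yS: "y \<notin> ?S" using noearly yx by auto
    have "x \<in> nbr V E y - (?S \<union> nbr_set V E ?S)"
      using xy xV step i xnotN unfolding nbr_def by auto
    moreover have "finite (nbr V E y - (?S \<union> nbr_set V E ?S))"
      using finV unfolding nbr_def by auto
    ultimately have "active_degree V E ?S y > 0"
      unfolding active_degree_def by (metis card_gt_0_iff empty_iff)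
    then have ex: "\<exists>u\<in>V - ?S. active_degree V E ?S u > 0" using yV yS by auto
    have "if (\<exists>u\<in>V - ?S. active_degree V E ?S u > 0)
         then (\<forall>u\<in>V - ?S. active_degree V E ?S u \<le> active_degree V E ?S (vs ! i))
         else vs ! i \<in> V - (?S \<union> nbr_set V E ?S)" by (rule run_if[OF run i(1)])
    then have "\<forall>u\<in>V - ?S. active_degree V E ?S u \<le> active_degree V E ?S (vs ! i)"
      unfolding if_P[OF ex] .
    then have "active_degree V E ?S y \<le> active_degree V E ?S (vs ! i)"
      using yV yS by blast
    then have "active_degree V E ?S y \<le> 0" using ad0[unfolded i(2)] by (rule ord_le_eq_trans)
    then have "\<not> 0 < active_degree V E ?S y" by (rule leD)
    then show False using \<open>active_degree V E ?S y > 0\<close> by contradiction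
  qed
qed

end
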